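(* Let $k\ge 2$ be a natural number, let $C>0$, and let $D\subseteq\mathbb{C}$ be a domain. Then the family $$\mathcal{F}_k:=\left\{ f \text{ holomorphic in } D \;:\; \frac{|f^{(k)}(z)|}{1+|f(z)|}\le C \text{ for all } z\in D\right\}$$ is quasi-normal in $D$.
   Context: A family $\mathcal{F}$ of meromorphic functions in a domain $D\subseteq\mathbb{C}$ is called quasi-normal if from each sequence $\{f_n\}_n$ in $\mathcal{F}$ one can extract a subsequence which converges locally uniformly (with respect to the spherical metric, the limit $\infty$ being allowed) on $D\setminus E$, where the set $E$ (which may depend on the sequence) has no accumulation point in $D$. *)

theory Defs
  imports "HOL-Complex_Analysis.Complex_Analysis"
begin

text \<open>Points of the Riemann sphere: \<open>Some a\<close> is the finite point a, \<open>None\<close> is \<infinity>.\<close>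

fun chordal :: "complex option \<Rightarrow> complex option \<Rightarrow> real" where
  "chordal (Some a) (Some b) =
     2 * norm (a - b) / (sqrt (1 + (norm a)\<^sup>2) * sqrt (1 + (norm b)\<^sup>2))"
| "chordal (Some a) None = 2 / sqrt (1 + (norm a)\<^sup>2)"
| "chordal None (Some b) = 2 / sqrt (1 + (norm b)\<^sup>2)"
| "chordal None None = 0"

definition sph_locally_uniform ::
  "(nat \<Rightarrow> complex \<Rightarrow> complex) \<Rightarrow> (complex \<Rightarrow> complex option) \<Rightarrow> complex set \<Rightarrow> bool" where
  "sph_locally_uniform fs g U \<longleftrightarrow>
     (\<forall>K. compact K \<and> K \<subseteq> U \<longrightarrow>
        (\<forall>e>0. \<forall>\<^sub>F n in sequentially. \<forall>z\<in>K. chordal (Some (fs n z)) (g z) < e))"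

definition quasi_normal :: "(complex \<Rightarrow> complex) set \<Rightarrow> complex set \<Rightarrow> bool" where
  "quasi_normal F D \<longleftrightarrow>
     (\<forall>fs. (\<forall>n. fs n \<in> F) \<longrightarrow>
        (\<exists>(r::nat \<Rightarrow> nat) (E::complex set) g. strict_mono r \<and> E \<subseteq> D \<and> (\<forall>z\<in>D. \<not> z islimpt E) \<and>
                 sph_locally_uniform (fs \<circ> r) g (D - E)))"

end

theory Submission
  imports Defs
begin

definition SD :: "nat \<Rightarrow> (complex \<Rightarrow> complex) \<Rightarrow> complex \<Rightarrow> real" where
  "SD k h z = (\<Sum>j<k. norm ((deriv ^^ j) h z))"

lemma SD_ge_norm:
  assumes "k \<ge> 1" shows "norm (h z) \<le> SD k h z"
proof -
  have "norm ((deriv ^^ 0) h z) \<le> SD k h z"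
    unfolding SD_def by (rule member_le_sum[of 0]) (use assms in auto)
  then show ?thesis by simp
qed

lemma SD_ge_0: "SD k h z \<ge> 0"
  unfolding SD_def by (simp add: sum_nonneg)

lemma step:
  fixes h :: "complex \<Rightarrow> complex"
  assumes hol: "h holomorphic_on D" and D: "open D" and sub: "cball a \<delta> \<subseteq> D" and d0: "0 \<le> \<delta>"
    and dC: "real k * \<delta> * (1 + C) \<le> 1/2" and C: "C \<ge> 0" and k: "k \<ge> 1"
    and ineq: "\<forall>z\<in>D. norm ((deriv ^^ k) h z) \<le> C * (1 + norm (h z))"
    and M: "SD k h a \<le> M"
  shows "\<forall>z\<in>cball a \<delta>. SD k h z \<le> 2*M+1"
proof -
  have hd: "\<And>j. (deriv^^j) h holomorphic_on D" using holomorphic_higher_deriv hol D by blast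
  have cont: "continuous_on (cball a \<delta>) (SD k h)" unfolding SD_def
    apply (intro continuous_intros)
    using hd sub holomorphic_on_imp_continuous_on continuous_on_subset by blast
  obtain u where u: "u \<in> cball a \<delta>" "\<forall>z\<in>cball a \<delta>. SD k h z \<le> SD k h u"
    using continuous_attains_sup[OF compact_cball _ cont] d0 by auto
  define U where "U = SD k h u"
  have U0: "U \<ge> 0" unfolding U_def by (rule SD_ge_0)
  have bndder: "norm ((deriv^^Suc j) h w) \<le> U + C*(1+U)" if "j < k" "w \<in> cball a \<delta>" for j w
  proof (cases "Suc j < k")
    case True
    have "norm ((deriv^^Suc j) h w) \<le> SD k h w"
      unfolding SD_def by (rule member_le_sum[of "Suc j"]) (use True in auto)
    also have "\<dots> \<le> U" using u that U_def by auto
    finally show ?thesis using C U0 by (smt (verit) mult_nonneg_nonneg)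
  next
    case False
    then have "Suc j = k" using that by auto
    then have "norm ((deriv^^Suc j) h w) \<le> C * (1 + norm (h w))" using ineq sub that by auto
    also have "\<dots> \<le> C * (1 + U)"
    proof -
      have "norm (h w) \<le> U" using SD_ge_norm[OF k, of h w] u(2) that(2) U_def by (metis order_trans)
      then show ?thesis using C by (intro mult_left_mono) auto
    qed
    finally show ?thesis using U0 by simp
  qed
  have diff: "norm ((deriv^^j) h z - (deriv^^j) h a) \<le> (U + C*(1+U)) * norm (z - a)"
    if "j < k" "z \<in> cball a \<delta>" for j z
  proof (rule field_differentiable_bound[of "cball a \<delta>" _ "\<lambda>w. (deriv^^Suc j) h w"])
    show "convex (cball a \<delta>)" by simp
    show "((deriv ^^ j) h has_field_derivative (deriv ^^ Suc j) h w) (at w within cball a \<delta>)"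
      if "w \<in> cball a \<delta>" for w
      using holomorphic_derivI[OF hd D, of w] that sub by auto
    show "norm ((deriv ^^ Suc j) h w) \<le> U + C * (1 + U)" if "w \<in> cball a \<delta>" for w
      using bndder \<open>j<k\<close> that by blast
    show "z \<in> cball a \<delta>" by fact
    show "a \<in> cball a \<delta>" using d0 by simp
  qed
  have allz: "SD k h z \<le> M + (1 + U)/2" if "z \<in> cball a \<delta>" for z
  proof -
    have "norm ((deriv^^j) h z) \<le> norm ((deriv^^j) h a) + (U + C*(1+U)) * \<delta>" if "j<k" for j
    proof -
      have "norm ((deriv^^j) h z) \<le> norm ((deriv^^j) h a) + norm ((deriv^^j) h z - (deriv^^j) h a)"
        by (metis add.commute diff_add_cancel norm_triangle_ineq)
      also have "\<dots> \<le> norm ((deriv^^j) h a) + (U + C*(1+U)) * norm (z - a)"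
        using diff[OF that \<open>z \<in> cball a \<delta>\<close>] by simp
      also have "\<dots> \<le> norm ((deriv^^j) h a) + (U + C*(1+U)) * \<delta>"
        using \<open>z \<in> cball a \<delta>\<close> U0 C by (intro add_left_mono mult_left_mono) (auto simp: dist_norm norm_minus_commute)
      finally show ?thesis .
    qed
    then have "SD k h z \<le> (\<Sum>j<k. norm ((deriv^^j) h a) + (U + C*(1+U)) * \<delta>)"
      unfolding SD_def by (intro sum_mono) auto
    also have "\<dots> = SD k h a + real k * ((U + C*(1+U)) * \<delta>)"
      unfolding SD_def by (simp add: sum.distrib)
    also have "real k * ((U + C*(1+U)) * \<delta>) \<le> (real k * \<delta> * (1 + C)) * (1 + U)"
    proof -
      have "real k * ((U + C*(1+U)) * \<delta>) = (real k * \<delta>) * (U + C*(1+U))" by simp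
      also have "\<dots> \<le> (real k * \<delta>) * ((1 + C) * (1 + U))"
        using d0 C U0 by (intro mult_left_mono) (auto simp: algebra_simps)
      finally show ?thesis by simp
    qed
    also have "(real k * \<delta> * (1 + C)) * (1 + U) \<le> 1/2 * (1 + U)"
      using dC U0 by (intro mult_right_mono) auto
    finally show ?thesis using M by simp
  qed
  have "U \<le> 2*M+1" using allz[OF u(1)] unfolding U_def[symmetric] by (simp add: field_simps)
  then show ?thesis using u U_def by fastforce
qed


lemma propagate:
  fixes h :: "nat \<Rightarrow> complex \<Rightarrow> complex"
  assumes D: "open D" "connected D" and z0: "z0 \<in> D" and C: "C \<ge> 0" and k: "k \<ge> 1"
    and hol: "\<And>n. h n holomorphic_on D"
    and ineq: "\<And>n. \<forall>z\<in>D. norm ((deriv ^^ k) (h n) z) \<le> C * (1 + norm (h n z))"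
    and M0: "\<And>n. SD k (h n) z0 \<le> M0"
    and K: "compact K" "K \<subseteq> D"
  shows "\<exists>B. \<forall>n. \<forall>z\<in>K. norm (h n z) \<le> B"
proof -
  define d0 where "d0 = 1 / (2 * real k * (1 + C))"
  have kpos: "real k > 0" using k by simp
  have d0pos: "d0 > 0" unfolding d0_def using kpos C by simp
  have dC: "real k * \<delta> * (1+C) \<le> 1/2" if "0 \<le> \<delta>" "\<delta> \<le> d0" for \<delta>
  proof -
    have "real k * \<delta> * (1+C) \<le> real k * d0 * (1+C)"
      using that kpos C by (intro mult_right_mono mult_left_mono) auto
    also have "\<dots> = (real k*(1+C)) / (2*(real k*(1+C)))" unfolding d0_def by simp
    also have "\<dots> = 1/2"
    proof -
      have "real k * (1+C) \<noteq> 0" using kpos C by simp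
      then show ?thesis by simp
    qed
    finally show ?thesis .
  qed
  define P where "P w \<longleftrightarrow> (\<exists>M. \<forall>n. SD k (h n) w \<le> M)" for w
  have loc: "\<exists>\<delta>>0. (\<exists>M. \<forall>n. \<forall>z\<in>ball w \<delta>. SD k (h n) z \<le> M)" if "w \<in> D" "P w" for w
  proof -
    obtain e where e: "e > 0" "cball w e \<subseteq> D" using D(1) \<open>w \<in> D\<close> open_contains_cball by blast
    define dl where "dl = min e d0"
    obtain M where M: "\<And>n. SD k (h n) w \<le> M" using \<open>P w\<close> P_def by blast
    have "\<forall>z\<in>cball w dl. SD k (h n) z \<le> 2*M+1" for n
      apply (rule step[OF hol D(1) _ _ dC C k ineq M])
      using e d0pos unfolding dl_def by auto
    then have "\<forall>n. \<forall>z\<in>ball w dl. SD k (h n) z \<le> 2*M+1" by (meson ball_subset_cball subsetD)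
    moreover have "dl > 0" using e d0pos dl_def by simp
    ultimately show ?thesis by blast
  qed
  have opI: "\<exists>T. openin (top_of_set D) T \<and> w \<in> T \<and> (\<forall>x\<in>T. \<forall>y\<in>T. P x \<longrightarrow> P y)" if "w \<in> D" for w
  proof -
    obtain e where e: "e > 0" "cball w e \<subseteq> D" using D(1) \<open>w \<in> D\<close> open_contains_cball by blast
    define \<rho> where "\<rho> = min (e/2) d0"
    have rho: "\<rho> > 0" "\<rho> \<le> d0" "\<rho> \<le> e/2" unfolding \<rho>_def using e d0pos by auto
    have "P y" if "x \<in> ball w (\<rho>/2)" "y \<in> ball w (\<rho>/2)" "P x" for x y
    proof -
      obtain M where M: "\<And>n. SD k (h n) x \<le> M" using \<open>P x\<close> P_def by blast
      have sub: "cball x \<rho> \<subseteq> D"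
      proof
        fix z assume "z \<in> cball x \<rho>"
        then have "dist x z \<le> \<rho>" by simp
        moreover have "dist w x < \<rho>/2" using that(1) by simp
        ultimately have "dist w z \<le> e" using rho dist_triangle[of w z x] by linarith
        then show "z \<in> D" using e by auto
      qed
      have "dist w x < \<rho>/2" "dist w y < \<rho>/2" using that(1,2) by simp_all
      then have "dist x y \<le> \<rho>" using dist_triangle[of x y w] dist_commute[of x w] by linarith
      then have "y \<in> cball x \<rho>" by simp
      then have "\<forall>n. SD k (h n) y \<le> 2*M+1"
        using step[OF hol D(1) sub _ dC C k ineq M] rho by auto
      then show ?thesis unfolding P_def by blast
    qed
    moreover have "openin (top_of_set D) (ball w (\<rho>/2))"
      by (rule open_subset) (use e rho in auto)
    moreover have "w \<in> ball w (\<rho>/2)" using rho by simp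
    ultimately show ?thesis by blast
  qed
  have allP: "P w" if "w \<in> D" for w
  proof (rule connected_induction_simple[OF D(2) z0 that, of P])
    show "P z0" unfolding P_def using M0 by blast
    show "\<exists>T. openin (top_of_set D) T \<and> a \<in> T \<and> (\<forall>x\<in>T. \<forall>y\<in>T. P x \<longrightarrow> P y)" if "a \<in> D" for a
      using opI[OF that] .
  qed
  have "\<forall>w\<in>K. \<exists>p. fst p > 0 \<and> (\<forall>n. \<forall>z\<in>ball w (fst p). SD k (h n) z \<le> snd p)"
  proof
    fix w assume "w \<in> K"
    then have "w \<in> D" using K by blast
    then obtain dl M where "dl > 0" "\<forall>n. \<forall>z\<in>ball w dl. SD k (h n) z \<le> M"
      using loc allP by blast
    then show "\<exists>p. fst p > 0 \<and> (\<forall>n. \<forall>z\<in>ball w (fst p). SD k (h n) z \<le> snd p)"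
      by (intro exI[of _ "(dl, M)"]) simp
  qed
  from bchoice[OF this] obtain pp where pp: "\<forall>w\<in>K. fst (pp w) > 0 \<and> (\<forall>n. \<forall>z\<in>ball w (fst (pp w)). SD k (h n) z \<le> snd (pp w))"
    by (elim exE) 
  define dd where "dd w = fst (pp w)" for w
  define MM where "MM w = snd (pp w)" for w
  have dd: "\<And>w. w \<in> K \<Longrightarrow> dd w > 0" unfolding dd_def using pp by simp
  have MM: "\<And>w n z. w \<in> K \<Longrightarrow> z \<in> ball w (dd w) \<Longrightarrow> SD k (h n) z \<le> MM w"
    unfolding dd_def MM_def using pp by simp
  have cov: "K \<subseteq> (\<Union>w\<in>K. ball w (dd w))"
  proof
    fix z assume "z \<in> K"
    then have "z \<in> ball z (dd z)" using dd[of z] by simp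
    then show "z \<in> (\<Union>w\<in>K. ball w (dd w))" using \<open>z \<in> K\<close> by blast
  qed
  obtain T where T: "T \<subseteq> K" "finite T" "K \<subseteq> (\<Union>w\<in>T. ball w (dd w))"
    using compactE_image[OF K(1), of K "\<lambda>w. ball w (dd w)", OF _ cov] by (metis open_ball)
  have "norm (h n z) \<le> (\<Sum>w\<in>T. max 0 (MM w))" if zK: "z \<in> K" for n z
  proof -
    obtain w where w: "w \<in> T" "z \<in> ball w (dd w)" using T zK by blast
    have "norm (h n z) \<le> SD k (h n) z" by (rule SD_ge_norm[OF k])
    also have "\<dots> \<le> max 0 (MM w)" using MM[of w z n] w T by auto
    also have "\<dots> \<le> (\<Sum>w\<in>T. max 0 (MM w))"
      by (rule member_le_sum) (use w T in auto)
    finally show ?thesis .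
  qed
  then show ?thesis by blast
qed

lemma chordal_Some_le: "chordal (Some a) (Some b) \<le> 2 * norm (a - b)"
proof -
  have p: "sqrt (1 + (norm a)\<^sup>2) \<ge> 1" "sqrt (1 + (norm b)\<^sup>2) \<ge> 1" by simp_all
  then have pq: "sqrt (1 + (norm a)\<^sup>2) * sqrt (1 + (norm b)\<^sup>2) \<ge> 1"
    using mult_mono[OF p(1) p(2)] by simp
  have "2 * norm (a - b) / (sqrt (1 + (norm a)\<^sup>2) * sqrt (1 + (norm b)\<^sup>2)) \<le> 2 * norm (a - b) / 1"
    by (rule divide_left_mono) (use pq in auto)
  then show ?thesis by simp
qed

lemma chordal_None_less:
  assumes "e > 0" "norm a > 2/e" shows "chordal (Some a) None < e"
proof -
  have "sqrt (1 + (norm a)\<^sup>2) \<ge> sqrt ((norm a)\<^sup>2)" by (intro real_sqrt_le_mono) simp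
  then have q: "sqrt (1 + (norm a)\<^sup>2) > 2/e" using assms by simp
  have pos: "2/e > 0" using assms by simp
  have "2 / sqrt (1 + (norm a)\<^sup>2) < 2 / (2/e)"
  proof (rule divide_strict_left_mono)
    have "1 + (norm a)\<^sup>2 > 0" by (simp add: add_pos_nonneg)
    then have "sqrt (1 + (norm a)\<^sup>2) > 0" by simp
    then show "0 < sqrt (1 + (norm a)\<^sup>2) * (2 / e)" using pos by simp
  qed (use q in auto)
  then show ?thesis using assms by simp
qed

theorem theorem1:
  fixes k :: nat and C :: real and D :: "complex set"
  assumes "k \<ge> 2" and "C > 0" and "open D" and "connected D" and "D \<noteq> {}"
  shows "quasi_normal
           {f. f holomorphic_on D \<and>
               (\<forall>z\<in>D. norm ((deriv ^^ k) f z) / (1 + norm (f z)) \<le> C)} D"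
  unfolding quasi_normal_def
proof (intro allI impI)
  fix fs :: "nat \<Rightarrow> complex \<Rightarrow> complex"
  assume fsF: "\<forall>n. fs n \<in> {f. f holomorphic_on D \<and>
               (\<forall>z\<in>D. norm ((deriv ^^ k) f z) / (1 + norm (f z)) \<le> C)}"
  have k1: "k \<ge> 1" using assms(1) by simp
  have C0: "C \<ge> 0" using assms(2) by simp
  have fsF': "fs n holomorphic_on D \<and> (\<forall>z\<in>D. norm ((deriv ^^ k) (fs n) z) / (1 + norm (fs n z)) \<le> C)" for n
    using fsF by simp
  have hol: "\<And>n. fs n holomorphic_on D" using fsF' by simp
  have ineqf: "norm ((deriv^^k) (fs n) z) \<le> C * (1 + norm (fs n z))" if "z \<in> D" for n z
  proof -
    have "norm ((deriv ^^ k) (fs n) z) / (1 + norm (fs n z)) \<le> C" using fsF' that by simp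
    moreover have "1 + norm (fs n z) > 0" by (simp add: add_pos_nonneg)
    ultimately show ?thesis by (simp add: pos_divide_le_eq mult.commute)
  qed
  obtain z0 where z0: "z0 \<in> D" using assms(5) by blast
  define s where "s n = 1 + SD k (fs n) z0" for n
  have s1: "s n \<ge> 1" for n unfolding s_def using SD_ge_0 by simp
  define hs where "hs n = (\<lambda>z. inverse (s n) * fs n z)" for n
  have holh: "hs n holomorphic_on D" for n unfolding hs_def using hol by (intro holomorphic_intros)
  have dh: "(deriv^^j) (hs n) z = inverse (s n) * (deriv^^j) (fs n) z" if "z \<in> D" for n j z
    unfolding hs_def by (rule higher_deriv_cmult[OF hol that assms(3)])
  have fs_eq: "fs n z = s n * hs n z" for n z
    unfolding hs_def using s1[of n] by simp
  have nrm1: "norm (inverse (complex_of_real (s n))) = inverse (s n)" for n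
    using s1[of n] by (simp add: norm_inverse)
  have nrm2: "norm (complex_of_real (s n)) = s n" for n
    using s1[of n] by simp
  have ineqh: "\<forall>z\<in>D. norm ((deriv^^k) (hs n) z) \<le> C * (1 + norm (hs n z))" for n
  proof
    fix z assume z: "z \<in> D"
    have i1: "inverse (s n) \<le> 1" "inverse (s n) > 0" using s1[of n] by (auto simp: inverse_le_1_iff)
    have "norm ((deriv^^k) (hs n) z) = inverse (s n) * norm ((deriv^^k) (fs n) z)"
      using dh[OF z] by (simp add: norm_mult nrm1)
    also have "\<dots> \<le> inverse (s n) * (C * (1 + norm (fs n z)))"
      using ineqf[OF z] i1 by (intro mult_left_mono) auto
    also have "\<dots> = C * (inverse (s n) + norm (hs n z))"
      unfolding hs_def by (simp add: norm_mult nrm1 algebra_simps)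
    also have "\<dots> \<le> C * (1 + norm (hs n z))"
      using i1 C0 by (intro mult_left_mono) auto
    finally show "norm ((deriv^^k) (hs n) z) \<le> C * (1 + norm (hs n z))" .
  qed
  have SDh: "SD k (hs n) z0 = (s n - 1) / s n" for n
  proof -
    have "SD k (hs n) z0 = (\<Sum>j<k. inverse (s n) * norm ((deriv^^j) (fs n) z0))"
      unfolding SD_def using dh[OF z0] by (simp add: norm_mult nrm1)
    also have "\<dots> = inverse (s n) * SD k (fs n) z0" unfolding SD_def by (simp add: sum_distrib_left)
    finally show ?thesis unfolding s_def by (simp add: field_simps)
  qed
  have SDh1: "SD k (hs n) z0 \<le> 1" for n
    unfolding SDh using s1[of n] by simp
  have bndh: "\<exists>B. \<forall>n. \<forall>z\<in>K. norm (hs n z) \<le> B" if "compact K" "K \<subseteq> D" for K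
    by (rule propagate[OF assms(3,4) z0 C0 k1 holh ineqh SDh1 that])
  show "\<exists>(r::nat \<Rightarrow> nat) (E::complex set) g. strict_mono r \<and> E \<subseteq> D \<and> (\<forall>z\<in>D. \<not> z islimpt E) \<and>
                 sph_locally_uniform (fs \<circ> r) g (D - E)"
  proof (cases "\<exists>B. infinite {n. s n \<le> B}")
    case True
    then obtain B where B: "infinite {n. s n \<le> B}" by blast
    from infinite_enumerate[OF B] obtain r :: "nat \<Rightarrow> nat" where r0: "strict_mono r \<and> (\<forall>n. r n \<in> {n. s n \<le> B})"
      by (rule exE)
    have r: "strict_mono r" "\<And>n. s (r n) \<le> B" using r0 by auto
    define F where "F n = fs (r n)" for n
    have B1: "B \<ge> 1" using r(2)[of 0] s1[of "r 0"] by simp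
    have Fhol: "h holomorphic_on D" if "h \<in> range F" for h using that hol F_def by auto
    have Fbnd: "\<exists>B. \<forall>h\<in>range F. \<forall>z\<in>K. norm (h z) \<le> B" if KK: "compact K" "K \<subseteq> D" for K
    proof -
      obtain Bh where Bh: "\<forall>n. \<forall>z\<in>K. norm (hs n z) \<le> Bh" using bndh[OF KK] by blast
      have "norm (F n z) \<le> B * Bh" if "z \<in> K" for n z
      proof -
        have "norm (F n z) = s (r n) * norm (hs (r n) z)"
          unfolding F_def fs_eq[of "r n" z] using s1[of "r n"] by (simp add: norm_mult)
        also have "\<dots> \<le> B * Bh"
          using r(2)[of n] Bh that s1[of "r n"] by (intro mult_mono) auto
        finally show ?thesis .
      qed
      then show ?thesis by blast
    qed
    obtain g r' where g: "g holomorphic_on D" "strict_mono r'"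
        "\<And>x. x \<in> D \<Longrightarrow> ((\<lambda>n. F (r' n) x) \<longlongrightarrow> g x) sequentially"
        "\<And>K. \<lbrakk>compact K; K \<subseteq> D\<rbrakk> \<Longrightarrow> uniform_limit K (F \<circ> r') g sequentially"
      apply (rule Montel[of D "range F" F])
          apply (rule assms(3))
         apply (erule Fhol)
        apply (erule (1) Fbnd)
       apply simp
      apply blast
      done
    have "sph_locally_uniform (fs \<circ> (r \<circ> r')) (\<lambda>z. Some (g z)) (D - {})"
      unfolding sph_locally_uniform_def
    proof (intro allI impI)
      fix K :: "complex set" and e :: real
      assume K: "compact K \<and> K \<subseteq> D - {}" and e: "e > 0"
      have Kc: "compact K" "K \<subseteq> D" using K by auto
      have "\<forall>\<^sub>F n in sequentially. \<forall>z\<in>K. dist ((F \<circ> r') n z) (g z) < e/2"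
        by (rule uniform_limitD[OF g(4)[OF Kc]]) (use e in simp)
      then show "\<forall>\<^sub>F n in sequentially. \<forall>z\<in>K. chordal (Some ((fs \<circ> (r \<circ> r')) n z)) (Some (g z)) < e"
      proof (rule eventually_mono)
        fix n assume H: "\<forall>z\<in>K. dist ((F \<circ> r') n z) (g z) < e/2"
        show "\<forall>z\<in>K. chordal (Some ((fs \<circ> (r \<circ> r')) n z)) (Some (g z)) < e"
        proof
          fix z assume "z \<in> K"
          have "chordal (Some ((fs \<circ> (r \<circ> r')) n z)) (Some (g z)) \<le> 2 * norm ((fs \<circ> (r \<circ> r')) n z - g z)"
            by (rule chordal_Some_le)
          also have "\<dots> < e" using H \<open>z \<in> K\<close> by (simp add: F_def dist_norm mult.commute)
          finally show "chordal (Some ((fs \<circ> (r \<circ> r')) n z)) (Some (g z)) < e" .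
        qed
      qed
    qed
    moreover have "strict_mono (r \<circ> r')" using r(1) g(2) by (rule strict_mono_o)
    ultimately show ?thesis
      by (intro exI[of _ "r \<circ> r'"] exI[of _ "{}"] exI[of _ "\<lambda>z. Some (g z)"] conjI) simp_all
  next
    case False
    have fin: "finite {n. s n \<le> B}" for B using \<open>\<not> (\<exists>B. infinite {n. s n \<le> B})\<close> by blast
    have sinf: "filterlim s at_top sequentially"
      unfolding filterlim_at_top
    proof
      fix Z :: real
      obtain N where N: "{n. s n \<le> Z} \<subseteq> {..<N}" using finite_nat_bounded[OF fin[of Z]] by blast
      show "\<forall>\<^sub>F n in sequentially. Z \<le> s n"
      proof (rule eventually_sequentiallyI[of N])
        fix n assume "N \<le> n"
        then have "n \<notin> {n. s n \<le> Z}" using N by auto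
        then show "Z \<le> s n" by simp
      qed
    qed
    have Hhol: "h holomorphic_on D" if "h \<in> range hs" for h using that holh by auto
    have Hbnd: "\<exists>B. \<forall>h\<in>range hs. \<forall>z\<in>K. norm (h z) \<le> B" if "compact K" "K \<subseteq> D" for K
      using bndh[OF that] by blast
    obtain g r where g: "g holomorphic_on D" "strict_mono r"
        "\<And>x. x \<in> D \<Longrightarrow> ((\<lambda>n. hs (r n) x) \<longlongrightarrow> g x) sequentially"
        "\<And>K. \<lbrakk>compact K; K \<subseteq> D\<rbrakk> \<Longrightarrow> uniform_limit K (hs \<circ> r) g sequentially"
      apply (rule Montel[of D "range hs" hs])
          apply (rule assms(3))
         apply (erule Hhol)
        apply (erule (1) Hbnd)
       apply simp
      apply blast
      done
    have sr: "filterlim (\<lambda>n. s (r n)) at_top sequentially"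
      using filterlim_compose[OF sinf filterlim_subseq[OF g(2)]] by (simp add: o_def)
    define E where "E = {z\<in>D. g z = 0}"
    have nolim: "\<not> z islimpt E" if "z \<in> D" for z
    proof
      assume lim: "z islimpt E"
      have g0: "g w = 0" if "w \<in> D" for w
        by (rule analytic_continuation[OF g(1) assms(3,4) _ \<open>z \<in> D\<close> lim _ that]) (auto simp: E_def)
      obtain \<rho> where rho: "\<rho> > 0" "cball z0 \<rho> \<subseteq> D" using assms(3) z0 open_contains_cball by blast
      define S where "S = (\<Sum>j<k. fact j / \<rho>^j)"
      have S0: "S \<ge> 0" unfolding S_def using rho by (intro sum_nonneg) auto
      define \<epsilon> where "\<epsilon> = 1 / (4 * (S + 1))"
      have eps: "\<epsilon> > 0" unfolding \<epsilon>_def using S0 by simp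
      have epsS: "\<epsilon> * S < 1/2"
      proof -
        have "\<epsilon> * S = S / (4 * (S+1))" unfolding \<epsilon>_def by simp
        also have "\<dots> < 1/2" using S0 by (simp add: field_simps)
        finally show ?thesis .
      qed
      have ev1: "\<forall>\<^sub>F n in sequentially. \<forall>w\<in>cball z0 \<rho>. dist ((hs \<circ> r) n w) (g w) < \<epsilon>"
        using uniform_limitD[OF g(4)[OF compact_cball rho(2)] eps] .
      have ev2: "\<forall>\<^sub>F n in sequentially. 2 \<le> s (r n)"
        using sr unfolding filterlim_at_top by blast
      obtain n where n1: "\<forall>w\<in>cball z0 \<rho>. dist ((hs \<circ> r) n w) (g w) < \<epsilon>" and n2: "2 \<le> s (r n)"
        using eventually_happens'[OF _ eventually_conj[OF ev1 ev2]] by auto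
      have small: "norm (hs (r n) w) < \<epsilon>" if "w \<in> cball z0 \<rho>" for w
      proof -
        have "w \<in> D" using that rho(2) by blast
        then have "g w = 0" by (rule g0)
        moreover have "dist ((hs \<circ> r) n w) (g w) < \<epsilon>" using n1 that by blast
        ultimately show ?thesis by (simp add: dist_norm)
      qed
      have der: "norm ((deriv^^j) (hs (r n)) z0) \<le> fact j * \<epsilon> / \<rho>^j" if "j < k" for j
      proof (cases "j = 0")
        case True
        then show ?thesis using small[of z0] rho by simp
      next
        case False
        show ?thesis
        proof (rule Cauchy_higher_deriv_bound[where y = 0])
          show "hs (r n) holomorphic_on ball z0 \<rho>"
            using holh rho(2) ball_subset_cball holomorphic_on_subset by blast
          show "continuous_on (cball z0 \<rho>) (hs (r n))"
            using holh rho(2) holomorphic_on_imp_continuous_on holomorphic_on_subset by blast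
          show "hs (r n) w \<in> ball 0 \<epsilon>" if "w \<in> ball z0 \<rho>" for w
            using small[of w] that by auto
        qed (use rho False in auto)
      qed
      have "SD k (hs (r n)) z0 \<le> (\<Sum>j<k. fact j * \<epsilon> / \<rho>^j)"
        unfolding SD_def by (intro sum_mono der) auto
      also have "\<dots> = \<epsilon> * S" unfolding S_def by (simp add: sum_distrib_left mult.commute)
      finally have lt: "SD k (hs (r n)) z0 < 1/2" using epsS by linarith
      have "SD k (hs (r n)) z0 \<ge> 1/2"
        unfolding SDh using n2 by (simp add: field_simps)
      then show False using lt by simp
    qed
    have "sph_locally_uniform (fs \<circ> r) (\<lambda>z. None) (D - E)"
      unfolding sph_locally_uniform_def
    proof (intro allI impI)
      fix K :: "complex set" and e :: real
      assume K: "compact K \<and> K \<subseteq> D - E" and e: "e > 0"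
      show "\<forall>\<^sub>F n in sequentially. \<forall>z\<in>K. chordal (Some ((fs \<circ> r) n z)) None < e"
      proof (cases "K = {}")
        case True then show ?thesis by simp
      next
        case False
        have contg: "continuous_on K (\<lambda>z. norm (g z))"
          using g(1) K holomorphic_on_imp_continuous_on holomorphic_on_subset
          by (intro continuous_intros) blast
        obtain z1 where z1: "z1 \<in> K" "\<forall>z\<in>K. norm (g z1) \<le> norm (g z)"
          using continuous_attains_inf[OF _ False contg] K by blast
        define m where "m = norm (g z1)"
        have m: "m > 0" unfolding m_def using z1 K E_def by auto
        have Kc: "compact K" "K \<subseteq> D" using K by auto
        have ev1: "\<forall>\<^sub>F n in sequentially. \<forall>z\<in>K. dist ((hs \<circ> r) n z) (g z) < m/2"
          by (rule uniform_limitD[OF g(4)[OF Kc]]) (use m in simp)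
        have ev2: "\<forall>\<^sub>F n in sequentially. 4/(m*e) + 1 \<le> s (r n)"
          using sr unfolding filterlim_at_top by blast
        show ?thesis
          using eventually_conj[OF ev1 ev2]
        proof (rule eventually_mono)
          fix n assume H: "(\<forall>z\<in>K. dist ((hs \<circ> r) n z) (g z) < m/2) \<and> 4/(m*e) + 1 \<le> s (r n)"
          show "\<forall>z\<in>K. chordal (Some ((fs \<circ> r) n z)) None < e"
          proof
            fix z assume z: "z \<in> K"
            have "norm (g z) - norm (hs (r n) z) \<le> norm (hs (r n) z - g z)"
              by (metis norm_minus_commute norm_triangle_ineq2)
            moreover have "norm (hs (r n) z - g z) < m/2"
            proof -
              have H1: "\<forall>z\<in>K. dist ((hs \<circ> r) n z) (g z) < m/2" using H by (rule conjunct1)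
              have "dist ((hs \<circ> r) n z) (g z) < m/2" using H1 z by blast
              then show ?thesis by (simp add: dist_norm)
            qed
            moreover have "m \<le> norm (g z)" unfolding m_def using z1(2) z by blast
            ultimately have hz: "norm (hs (r n) z) > m/2" by linarith
            have sp: "s (r n) > 0" using s1[of "r n"] by simp
            have "norm (fs (r n) z) = s (r n) * norm (hs (r n) z)"
              unfolding fs_eq[of "r n" z] using s1[of "r n"] by (simp add: norm_mult)
            also have "\<dots> \<ge> s (r n) * (m/2)"
              using hz sp by (intro mult_left_mono) auto
            finally have f1: "norm (fs (r n) z) \<ge> s (r n) * (m/2)" .
            have "s (r n) * (m/2) \<ge> (4/(m*e) + 1) * (m/2)"
              using H m by (intro mult_right_mono) auto
            moreover have "(4/(m*e) + 1) * (m/2) > 2/e"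
              using m e by (simp add: field_simps)
            ultimately have "norm (fs (r n) z) > 2/e" using f1 by linarith
            then show "chordal (Some ((fs \<circ> r) n z)) None < e"
              using chordal_None_less[OF e] by simp
          qed
        qed
      qed
    qed
    moreover have "E \<subseteq> D" unfolding E_def by blast
    ultimately show ?thesis using g(2) nolim
      by (intro exI[of _ r] exI[of _ E] exI[of _ "\<lambda>z. None"] conjI) simp_all
  qed
qed

end
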